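(* Let $n\ge1$, $s\in(0,1/2)$ and $\delta>0$. There exists $C>0$, depending only on $\delta$, $n$ and $s$, such that for every $u\in L^1(Q)$ with $\int_Q u(x)\,dx=0$, $$\iint_{Q\times Q}\frac{|u(x)-u(y)|}{|x-y|^{n+2s}}\,dx\,dy\le C\iint_{(Q\times Q)\cap\{|x-y|<\delta\}}\frac{|u(x)-u(y)|}{|x-y|^{n+2s}}\,dx\,dy.$$
   Context: $Q=(0,1)^n$. *)

theory Defs
  imports "HOL-Analysis.Analysis"
begin

definition unit_cube :: "(real ^ 'n) set" where
  "unit_cube = {x. \<forall>i. 0 < x $ i \<and> x $ i < 1}"

end

theory Submission
  imports Defs
begin

lemma open_unit_cube: "open (unit_cube :: (real^'n) set)"
proof -
  have "unit_cube = (\<Inter>i\<in>UNIV. {x::real^'n. 0 < x$i} \<inter> {x. x$i < 1})"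
    by (auto simp: unit_cube_def)
  moreover have "open (\<Inter>i\<in>UNIV. {x::real^'n. 0 < x$i} \<inter> {x. x$i < 1})"
    by (intro open_INT finite_UNIV ballI open_Int open_Collect_less continuous_intros) simp_all
  ultimately show ?thesis by simp
qed

lemma bounded_unit_cube: "bounded (unit_cube :: (real^'n) set)"
proof -
  have "norm x \<le> real CARD('n)" if "x \<in> unit_cube" for x :: "real^'n"
  proof -
    have "norm x \<le> (\<Sum>i\<in>UNIV. \<bar>x$i\<bar>)" by (rule norm_le_l1_cart)
    also have "\<dots> \<le> (\<Sum>i\<in>(UNIV::'n set). 1)"
      using that by (intro sum_mono) (auto simp: unit_cube_def less_imp_le)
    finally show ?thesis by simp
  qed
  then show ?thesis unfolding bounded_iff by blast
qed

lemma unit_cube_lmeas: "(unit_cube :: (real^'n) set) \<in> lmeasurable"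
  by (simp add: lmeasurable_open open_unit_cube bounded_unit_cube)

lemma unit_cube_sets[measurable]: "(unit_cube :: (real^'n) set) \<in> sets lebesgue"
  using unit_cube_lmeas fmeasurableD by blast

lemma unit_cube_borel[measurable]: "(unit_cube :: (real^'n) set) \<in> sets borel"
  by (simp add: open_unit_cube)

lemma dist_unit_cube: "x \<in> unit_cube \<Longrightarrow> y \<in> unit_cube \<Longrightarrow> dist x y < real CARD('n::finite)"
  for x y :: "real^'n"
proof -
  assume x: "x \<in> unit_cube" and y: "y \<in> unit_cube"
  have "dist x y = norm (x - y)" by (simp add: dist_norm)
  also have "\<dots> \<le> (\<Sum>i\<in>UNIV. \<bar>(x-y)$i\<bar>)" by (rule norm_le_l1_cart)
  also have "\<dots> < (\<Sum>i\<in>(UNIV::'n set). 1)"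
  proof (intro sum_strict_mono)
    fix i
    have "0 < x$i" "x$i < 1" "0 < y$i" "y$i < 1" using x y by (auto simp: unit_cube_def)
    then show "\<bar>(x-y)$i\<bar> < 1" by auto
  qed auto
  finally show ?thesis by simp
qed

interpretation Qfin: finite_measure "lebesgue_on (unit_cube :: (real^'n) set)"
  by (rule finite_measure_lebesgue_on[OF unit_cube_lmeas])

interpretation Qpair: pair_sigma_finite "lebesgue_on (unit_cube :: (real^'n) set)" "lebesgue_on (unit_cube :: (real^'n) set)"
  by unfold_locales

lemma meas_id_Q[measurable]: "(\<lambda>x. x) \<in> lebesgue_on (unit_cube :: (real^'n) set) \<rightarrow>\<^sub>M borel"
  by (intro measurable_restrict_space1 measurable_completion) simp

lemma meas_test:
  fixes v :: "real^'n \<Rightarrow> real"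
  assumes [measurable]: "v \<in> borel_measurable borel"
  shows "(\<lambda>z. ennreal (indicator {z. dist (fst z) (snd z) < r} z * \<bar>v (fst z) - v (midpoint (fst z) (snd z))\<bar>))
     \<in> borel_measurable (lebesgue_on unit_cube \<Otimes>\<^sub>M lebesgue_on unit_cube)"
  unfolding midpoint_def by measurable

lemma cube_mid: "x \<in> unit_cube \<Longrightarrow> w \<in> unit_cube \<Longrightarrow> midpoint x w \<in> unit_cube"
  for x w :: "real^'n"
proof -
  assume x: "x \<in> unit_cube" and w: "w \<in> unit_cube"
  have "0 < (midpoint x w)$i \<and> (midpoint x w)$i < 1" for i
  proof -
    have "0 < x$i" "x$i < 1" "0 < w$i" "w$i < 1" using x w by (auto simp: unit_cube_def)
    then show ?thesis by (simp add: midpoint_def)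
  qed
  then show ?thesis by (simp add: unit_cube_def)
qed

lemma e2: "ennreal (2 ^ n) = (2::ennreal)^n"
  by (metis ennreal_numeral ennreal_power zero_le_numeral)

lemma mid_affine: "midpoint x (- x + (2::real) *\<^sub>R m) = m" for x m :: "real^'n"
  by (simp add: midpoint_def algebra_simps)

lemma mid_affine2: "midpoint x ((2::real) *\<^sub>R m - x) = m" for x m :: "real^'n"
  by (simp add: midpoint_def algebra_simps)

lemma cv:
  fixes x :: "real^'n" and g :: "real^'n \<Rightarrow> ennreal"
  assumes x: "x \<in> unit_cube" and g[measurable]: "g \<in> borel_measurable borel"
  shows "(\<integral>\<^sup>+y. indicator {y. dist x y < 2*r} y * g (midpoint x y) \<partial>lebesgue_on unit_cube)
     \<le> (2::ennreal)^DIM(real^'n) * (\<integral>\<^sup>+m. indicator {m. dist x m < r} m * g m \<partial>lebesgue_on unit_cube)"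
proof -
  let ?k = "\<lambda>y. indicator {y. dist x y < 2*r} y * g (midpoint x y) * indicator unit_cube y"
  have [measurable]: "?k \<in> borel_measurable borel" unfolding midpoint_def by measurable
  have "(\<integral>\<^sup>+y. indicator {y. dist x y < 2*r} y * g (midpoint x y) \<partial>lebesgue_on unit_cube)
      = (\<integral>\<^sup>+y. ?k y \<partial>lborel)"
    by (simp add: nn_integral_restrict_space nn_integral_completion)
  also have "\<dots> = (\<integral>\<^sup>+y. ?k y \<partial>density (distr lborel borel (\<lambda>m. - x + (2::real) *\<^sub>R m)) (\<lambda>_. \<bar>2::real\<bar>^DIM(real^'n)))"
    by (subst lborel_affine[of 2 "-x"]) simp_all
  also have "\<dots> = (\<integral>\<^sup>+m. (2::ennreal)^DIM(real^'n) * ?k (- x + (2::real) *\<^sub>R m) \<partial>lborel)"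
    by (simp add: nn_integral_density nn_integral_distr e2)
  also have "\<dots> \<le> (\<integral>\<^sup>+m. (2::ennreal)^DIM(real^'n) * (indicator {m. dist x m < r} m * g m * indicator unit_cube m) \<partial>lborel)"
  proof (intro nn_integral_mono mult_left_mono)
    fix m :: "real^'n"
    have d: "dist x (- x + (2::real) *\<^sub>R m) = 2 * dist x m"
    proof -
      have "dist x (- x + (2::real) *\<^sub>R m) = norm ((2::real) *\<^sub>R (x - m))"
      proof -
        have "x - (- x + (2::real) *\<^sub>R m) = (2::real) *\<^sub>R (x - m)"
          by (simp add: scaleR_2 algebra_simps)
        then show ?thesis by (simp add: dist_norm)
      qed
      also have "\<dots> = 2 * dist x m" by (simp add: dist_norm)
      finally show ?thesis .
    qed
    have q: "- x + (2::real) *\<^sub>R m \<in> unit_cube \<Longrightarrow> m \<in> unit_cube"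
      using cube_mid[OF x, of "- x + (2::real) *\<^sub>R m"] by (simp add: mid_affine mid_affine2)
    show "?k (- x + (2::real) *\<^sub>R m) \<le> indicator {m. dist x m < r} m * g m * indicator unit_cube m"
    proof -
      have d2: "dist x ((2::real) *\<^sub>R m - x) = 2 * dist x m" using d by simp
      show ?thesis using q by (auto simp: indicator_def d d2 mid_affine mid_affine2)
    qed
  qed simp
  also have "\<dots> = (2::ennreal)^DIM(real^'n) * (\<integral>\<^sup>+m. indicator {m. dist x m < r} m * g m * indicator unit_cube m \<partial>lborel)"
  proof -
    have meas: "(\<lambda>m. indicator {m. dist x m < r} m * g m * indicator unit_cube m) \<in> borel_measurable borel"
      by measurable
    show ?thesis using meas by (simp add: nn_integral_cmult)
  qed
  also have "(\<integral>\<^sup>+m. indicator {m. dist x m < r} m * g m * indicator unit_cube m \<partial>lborel)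
      = (\<integral>\<^sup>+m. indicator {m. dist x m < r} m * g m \<partial>lebesgue_on unit_cube)"
    by (simp add: nn_integral_restrict_space nn_integral_completion)
  finally show ?thesis .
qed

definition Iv :: "(real^'n \<Rightarrow> real) \<Rightarrow> real \<Rightarrow> ennreal" where
  "Iv v r = (\<integral>\<^sup>+z. indicator {z. dist (fst z) (snd z) < r} z * ennreal \<bar>v (fst z) - v (snd z)\<bar>
       \<partial>(lebesgue_on unit_cube \<Otimes>\<^sub>M lebesgue_on unit_cube))"

lemma Iv_fst: "v \<in> borel_measurable borel \<Longrightarrow> Iv v r = (\<integral>\<^sup>+x. \<integral>\<^sup>+y. indicator {y. dist x y < r} y * ennreal \<bar>v x - v y\<bar>
   \<partial>lebesgue_on unit_cube \<partial>lebesgue_on unit_cube)"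
  unfolding Iv_def
  by (subst Qfin.nn_integral_fst[symmetric]) (measurable, auto simp: indicator_def)

lemma Iv_snd: "v \<in> borel_measurable borel \<Longrightarrow> Iv v r = (\<integral>\<^sup>+y. \<integral>\<^sup>+x. indicator {x. dist y x < r} x * ennreal \<bar>v x - v y\<bar>
   \<partial>lebesgue_on unit_cube \<partial>lebesgue_on unit_cube)"
  unfolding Iv_def
  by (subst Qpair.nn_integral_snd[symmetric]) (measurable, auto simp: indicator_def dist_commute)

lemma doubling:
  fixes v :: "real^'n \<Rightarrow> real"
  assumes v[measurable]: "v \<in> borel_measurable borel"
  shows "Iv v (2*r) \<le> 2 * (2::ennreal)^DIM(real^'n) * Iv v r"
proof -
  let ?M = "lebesgue_on (unit_cube :: (real^'n) set)"
  let ?A = "\<lambda>z::(real^'n) \<times> (real^'n). indicator {y. dist (fst z) y < 2*r} (snd z) * ennreal \<bar>v (fst z) - v (midpoint (fst z) (snd z))\<bar>"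
  let ?B = "\<lambda>z::(real^'n) \<times> (real^'n). indicator {x. dist (snd z) x < 2*r} (fst z) * ennreal \<bar>v (midpoint (snd z) (fst z)) - v (snd z)\<bar>"
  have mA[measurable]: "?A \<in> borel_measurable (?M \<Otimes>\<^sub>M ?M)" unfolding midpoint_def by measurable
  have mB[measurable]: "?B \<in> borel_measurable (?M \<Otimes>\<^sub>M ?M)" unfolding midpoint_def by measurable
  have s1: "Iv v (2*r) \<le> (\<integral>\<^sup>+z. ?A z + ?B z \<partial>(?M \<Otimes>\<^sub>M ?M))"
    unfolding Iv_def
  proof (intro nn_integral_mono)
    fix z :: "(real^'n) \<times> (real^'n)"
    obtain x y where z: "z = (x, y)" by (cases z)
    have "\<bar>v x - v y\<bar> \<le> \<bar>v x - v (midpoint x y)\<bar> + \<bar>v (midpoint y x) - v y\<bar>"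
    proof -
      have "midpoint y x = midpoint x y" by (rule midpoint_sym)
      then show ?thesis by simp
    qed
    then have "ennreal \<bar>v x - v y\<bar> \<le> ennreal \<bar>v x - v (midpoint x y)\<bar> + ennreal \<bar>v (midpoint y x) - v y\<bar>"
      by (simp add: ennreal_plus[symmetric] ennreal_leI del: ennreal_plus)
    then show "indicator {z. dist (fst z) (snd z) < 2*r} z * ennreal \<bar>v (fst z) - v (snd z)\<bar> \<le> ?A z + ?B z"
    proof (cases "dist x y < 2*r")
      case True
      then have "dist y x < 2*r" by (simp add: dist_commute)
      with True show ?thesis using \<open>ennreal \<bar>v x - v y\<bar> \<le> _\<close> by (simp add: z)
    next
      case False
      then show ?thesis by (simp add: z)
    qed
  qed
  have s2: "(\<integral>\<^sup>+z. ?A z + ?B z \<partial>(?M \<Otimes>\<^sub>M ?M)) = (\<integral>\<^sup>+z. ?A z \<partial>(?M \<Otimes>\<^sub>M ?M)) + (\<integral>\<^sup>+z. ?B z \<partial>(?M \<Otimes>\<^sub>M ?M))"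
    by (rule nn_integral_add) simp_all
  have s3: "(\<integral>\<^sup>+z. ?A z \<partial>(?M \<Otimes>\<^sub>M ?M)) \<le> (2::ennreal)^DIM(real^'n) * Iv v r"
  proof -
    have "(\<integral>\<^sup>+z. ?A z \<partial>(?M \<Otimes>\<^sub>M ?M)) = (\<integral>\<^sup>+x. \<integral>\<^sup>+y. ?A (x,y) \<partial>?M \<partial>?M)"
      by (rule Qfin.nn_integral_fst[symmetric]) simp
    also have "\<dots> \<le> (\<integral>\<^sup>+x. (2::ennreal)^DIM(real^'n) * \<integral>\<^sup>+y. indicator {y. dist x y < r} y * ennreal \<bar>v x - v y\<bar> \<partial>?M \<partial>?M)"
    proof (intro nn_integral_mono)
      fix x assume "x \<in> space ?M"
      then have x: "x \<in> unit_cube" by simp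
      show "(\<integral>\<^sup>+y. ?A (x,y) \<partial>?M) \<le> (2::ennreal)^DIM(real^'n) * \<integral>\<^sup>+y. indicator {y. dist x y < r} y * ennreal \<bar>v x - v y\<bar> \<partial>?M"
        using cv[OF x, of "\<lambda>m. ennreal \<bar>v x - v m\<bar>" r] by simp
    qed
    also have "\<dots> = (2::ennreal)^DIM(real^'n) * Iv v r"
      by (subst nn_integral_cmult) (measurable, simp add: Iv_fst[OF v])
    finally show ?thesis .
  qed
  have s4: "(\<integral>\<^sup>+z. ?B z \<partial>(?M \<Otimes>\<^sub>M ?M)) \<le> (2::ennreal)^DIM(real^'n) * Iv v r"
  proof -
    have "(\<integral>\<^sup>+z. ?B z \<partial>(?M \<Otimes>\<^sub>M ?M)) = (\<integral>\<^sup>+y. \<integral>\<^sup>+x. ?B (x,y) \<partial>?M \<partial>?M)"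
      by (rule Qpair.nn_integral_snd[symmetric]) simp
    also have "\<dots> \<le> (\<integral>\<^sup>+y. (2::ennreal)^DIM(real^'n) * \<integral>\<^sup>+x. indicator {x. dist y x < r} x * ennreal \<bar>v x - v y\<bar> \<partial>?M \<partial>?M)"
    proof (intro nn_integral_mono)
      fix y assume "y \<in> space ?M"
      then have y: "y \<in> unit_cube" by simp
      show "(\<integral>\<^sup>+x. ?B (x,y) \<partial>?M) \<le> (2::ennreal)^DIM(real^'n) * \<integral>\<^sup>+x. indicator {x. dist y x < r} x * ennreal \<bar>v x - v y\<bar> \<partial>?M"
        using cv[OF y, of "\<lambda>m. ennreal \<bar>v m - v y\<bar>" r] by simp
    qed
    also have "\<dots> = (2::ennreal)^DIM(real^'n) * Iv v r"
      by (subst nn_integral_cmult) (measurable, simp add: Iv_snd[OF v])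
    finally show ?thesis .
  qed
  have "Iv v (2*r) \<le> (2::ennreal)^DIM(real^'n) * Iv v r + (2::ennreal)^DIM(real^'n) * Iv v r"
  proof -
    have "Iv v (2*r) \<le> (\<integral>\<^sup>+z. ?A z \<partial>(?M \<Otimes>\<^sub>M ?M)) + (\<integral>\<^sup>+z. ?B z \<partial>(?M \<Otimes>\<^sub>M ?M))"
      using s1 unfolding s2 .
    then show ?thesis by (rule order_trans[OF _ add_mono[OF s3 s4]])
  qed
  then show ?thesis by (simp only: mult.assoc mult_2[of "(2::ennreal)^DIM(real^'n) * Iv v r"])
qed

lemma iter:
  fixes v :: "real^'n \<Rightarrow> real"
  assumes v[measurable]: "v \<in> borel_measurable borel"
  shows "Iv v (2^k * r) \<le> (2 * (2::ennreal)^DIM(real^'n))^k * Iv v r"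
proof (induction k)
  case 0
  then show ?case by simp
next
  case (Suc k)
  have "Iv v (2^Suc k * r) = Iv v (2 * (2^k * r))" by (simp add: mult.assoc)
  also have "\<dots> \<le> 2 * (2::ennreal)^DIM(real^'n) * Iv v (2^k * r)" by (rule doubling[OF v])
  also have "\<dots> \<le> 2 * (2::ennreal)^DIM(real^'n) * ((2 * (2::ennreal)^DIM(real^'n))^k * Iv v r)"
    by (rule mult_left_mono[OF Suc.IH]) simp
  finally show ?case by (simp add: mult.assoc)
qed

lemma Iv_full:
  fixes v :: "real^'n \<Rightarrow> real"
  assumes "real CARD('n) \<le> R"
  shows "Iv v R = (\<integral>\<^sup>+z. ennreal \<bar>v (fst z) - v (snd z)\<bar> \<partial>(lebesgue_on unit_cube \<Otimes>\<^sub>M lebesgue_on unit_cube))"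
  unfolding Iv_def
proof (intro nn_integral_cong)
  fix z :: "(real^'n) \<times> (real^'n)"
  assume "z \<in> space (lebesgue_on unit_cube \<Otimes>\<^sub>M lebesgue_on unit_cube)"
  then have "fst z \<in> unit_cube" "snd z \<in> unit_cube" by (auto simp: space_pair_measure)
  then have "dist (fst z) (snd z) < R" using dist_unit_cube assms by fastforce
  then show "indicator {z. dist (fst z) (snd z) < R} z * ennreal \<bar>v (fst z) - v (snd z)\<bar> = ennreal \<bar>v (fst z) - v (snd z)\<bar>"
    by simp
qed

lemma Iv_near:
  fixes v :: "real^'n \<Rightarrow> real" and p \<delta> :: real
  assumes "0 < \<delta>" "0 \<le> p"
  shows "Iv v (min \<delta> 1) \<le> (\<integral>\<^sup>+ z. ennreal (indicator {z. dist (fst z) (snd z) < \<delta>} z *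
                 \<bar>v (fst z) - v (snd z)\<bar> / dist (fst z) (snd z) powr p)
          \<partial>(lebesgue_on unit_cube \<Otimes>\<^sub>M lebesgue_on unit_cube))"
  unfolding Iv_def
proof (intro nn_integral_mono)
  fix z :: "(real^'n) \<times> (real^'n)"
  obtain x y where z: "z = (x, y)" by (cases z)
  show "indicator {z. dist (fst z) (snd z) < min \<delta> 1} z * ennreal \<bar>v (fst z) - v (snd z)\<bar>
    \<le> ennreal (indicator {z. dist (fst z) (snd z) < \<delta>} z * \<bar>v (fst z) - v (snd z)\<bar> / dist (fst z) (snd z) powr p)"
  proof (cases "dist x y < min \<delta> 1")
    case True
    show ?thesis
    proof (cases "x = y")
      case True then show ?thesis by (simp add: z)
    next
      case False
      then have d0: "0 < dist x y" by simp
      have "dist x y powr p \<le> 1" using True d0 assms by (intro powr_le1) auto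
      then have "\<bar>v x - v y\<bar> \<le> \<bar>v x - v y\<bar> / dist x y powr p"
        using d0 by (simp add: le_divide_eq mult_left_le)
      with True show ?thesis by (simp add: z ennreal_leI)
    qed
  next
    case False then show ?thesis by (simp add: z)
  qed
qed

lemma Kpow: "ennreal ((2 * 2^D)^k) = (2 * (2::ennreal)^D)^k"
proof -
  have "(2 * (2::real)^D)^k = 2^(Suc D * k)" by (simp add: power_mult_distrib power_add power_mult)
  moreover have "(2 * (2::ennreal)^D)^k = 2^(Suc D * k)" by (simp add: power_mult_distrib power_add power_mult)
  ultimately show ?thesis by (simp add: e2)
qed

lemma far:
  fixes v :: "real^'n \<Rightarrow> real" and p \<delta> :: real
  assumes v[measurable]: "v \<in> borel_measurable borel" and d: "0 < \<delta>" "0 \<le> p"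
  shows "(\<integral>\<^sup>+ z. ennreal (\<bar>v (fst z) - v (snd z)\<bar> / dist (fst z) (snd z) powr p)
          \<partial>(lebesgue_on unit_cube \<Otimes>\<^sub>M lebesgue_on unit_cube))
     \<le> (\<integral>\<^sup>+ z. ennreal (indicator {z. dist (fst z) (snd z) < \<delta>} z *
                 \<bar>v (fst z) - v (snd z)\<bar> / dist (fst z) (snd z) powr p)
          \<partial>(lebesgue_on unit_cube \<Otimes>\<^sub>M lebesgue_on unit_cube))
      + ennreal (\<delta> powr (-p)) * (\<integral>\<^sup>+z. ennreal \<bar>v (fst z) - v (snd z)\<bar> \<partial>(lebesgue_on unit_cube \<Otimes>\<^sub>M lebesgue_on unit_cube))"
proof -
  let ?M = "lebesgue_on (unit_cube :: (real^'n) set)"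
  let ?f = "\<lambda>z::(real^'n)\<times>(real^'n). ennreal (indicator {z. dist (fst z) (snd z) < \<delta>} z *
                 \<bar>v (fst z) - v (snd z)\<bar> / dist (fst z) (snd z) powr p)"
  let ?g = "\<lambda>z::(real^'n)\<times>(real^'n). ennreal \<bar>v (fst z) - v (snd z)\<bar>"
  have mf[measurable]: "?f \<in> borel_measurable (?M \<Otimes>\<^sub>M ?M)" by measurable
  have mg[measurable]: "?g \<in> borel_measurable (?M \<Otimes>\<^sub>M ?M)" by measurable
  have "(\<integral>\<^sup>+ z. ennreal (\<bar>v (fst z) - v (snd z)\<bar> / dist (fst z) (snd z) powr p) \<partial>(?M \<Otimes>\<^sub>M ?M))
      \<le> (\<integral>\<^sup>+ z. ?f z + ennreal (\<delta> powr (-p)) * ?g z \<partial>(?M \<Otimes>\<^sub>M ?M))"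
  proof (intro nn_integral_mono)
    fix z :: "(real^'n)\<times>(real^'n)"
    obtain x y where z: "z = (x, y)" by (cases z)
    have "\<bar>v x - v y\<bar> / dist x y powr p \<le> indicator {z. dist (fst z) (snd z) < \<delta>} (x,y) *
                 \<bar>v x - v y\<bar> / dist x y powr p + \<delta> powr (-p) * \<bar>v x - v y\<bar>"
    proof (cases "dist x y < \<delta>")
      case True then show ?thesis by simp
    next
      case False
      then have "\<delta> powr p \<le> dist x y powr p" using d by (intro powr_mono2) auto
      moreover have "0 < \<delta> powr p" using d by simp
      moreover have "0 < dist x y powr p" using d False by (simp add: not_less) (metis dist_self order.strict_iff_not)
      ultimately have "\<bar>v x - v y\<bar> / dist x y powr p \<le> \<bar>v x - v y\<bar> / \<delta> powr p"
        by (intro divide_left_mono) auto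
      also have "\<dots> = \<delta> powr (-p) * \<bar>v x - v y\<bar>" by (simp add: powr_minus divide_inverse)
      finally show ?thesis using False by simp
    qed
    then show "ennreal (\<bar>v (fst z) - v (snd z)\<bar> / dist (fst z) (snd z) powr p) \<le> ?f z + ennreal (\<delta> powr (-p)) * ?g z"
      by (simp add: z ennreal_mult[symmetric] ennreal_plus[symmetric] ennreal_leI del: ennreal_plus)
  qed
  also have "\<dots> = (\<integral>\<^sup>+ z. ?f z \<partial>(?M \<Otimes>\<^sub>M ?M)) + ennreal (\<delta> powr (-p)) * (\<integral>\<^sup>+ z. ?g z \<partial>(?M \<Otimes>\<^sub>M ?M))"
    by (simp add: nn_integral_add nn_integral_cmult)
  finally show ?thesis .
qed

theorem mainTheorem16:
  fixes s \<delta> :: real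
  assumes "0 < s" and "s < 1/2" and "0 < \<delta>"
  shows "\<exists>C::real. C > 0 \<and>
    (\<forall>u :: real ^ 'n \<Rightarrow> real.
       integrable (lebesgue_on (unit_cube :: (real ^ 'n) set)) u \<longrightarrow>
       integral\<^sup>L (lebesgue_on unit_cube) u = 0 \<longrightarrow>
       (\<integral>\<^sup>+ z. ennreal (\<bar>u (fst z) - u (snd z)\<bar> /
                 dist (fst z) (snd z) powr (real CARD('n) + 2 * s))
          \<partial>(lebesgue_on unit_cube \<Otimes>\<^sub>M lebesgue_on unit_cube))
       \<le> ennreal C *
         (\<integral>\<^sup>+ z. ennreal (indicator {z. dist (fst z) (snd z) < \<delta>} z *
                 \<bar>u (fst z) - u (snd z)\<bar> /
                 dist (fst z) (snd z) powr (real CARD('n) + 2 * s))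
          \<partial>(lebesgue_on unit_cube \<Otimes>\<^sub>M lebesgue_on unit_cube)))"
proof -
  define p where "p = real CARD('n) + 2 * s"
  have p0: "0 \<le> p" using assms by (simp add: p_def)
  define r where "r = min \<delta> 1"
  have r0: "0 < r" using assms by (simp add: r_def)
  obtain k :: nat where k: "real CARD('n) / r < 2^k" using real_arch_pow[of 2 "real CARD('n) / r"] by auto
  have kR: "real CARD('n) \<le> 2^k * r" using k r0 by (simp add: divide_less_eq)
  define C where "C = 1 + \<delta> powr (-p) * (2 * 2^DIM(real^'n))^k"
  have C0: "C > 0" unfolding C_def by (intro add_pos_nonneg) auto
  have eC: "ennreal C = 1 + ennreal (\<delta> powr (-p)) * (2 * (2::ennreal)^DIM(real^'n))^k"
  proof -
    have "ennreal C = ennreal 1 + ennreal (\<delta> powr (-p) * (2 * 2^DIM(real^'n))^k)"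
      unfolding C_def by (rule ennreal_plus) simp_all
    also have "ennreal (\<delta> powr (-p) * (2 * 2^DIM(real^'n))^k) = ennreal (\<delta> powr (-p)) * ennreal ((2 * 2^DIM(real^'n))^k)"
      by (rule ennreal_mult) simp_all
    also have "ennreal ((2 * 2^DIM(real^'n))^k) = (2 * (2::ennreal)^DIM(real^'n))^k"
      by (rule Kpow)
    finally show ?thesis by simp
  qed
  let ?M = "lebesgue_on (unit_cube :: (real^'n) set)"
  show ?thesis unfolding p_def[symmetric]
  proof (intro exI[of _ C] conjI allI impI C0)
    fix u :: "real^'n \<Rightarrow> real"
    assume int: "integrable ?M u"
    have um[measurable]: "u \<in> borel_measurable ?M" using int by (rule borel_measurable_integrable)
    have "(\<lambda>x. indicator unit_cube x *\<^sub>R u x) \<in> borel_measurable lebesgue"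
      using um borel_measurable_restrict_space_iff[of unit_cube lebesgue u] by simp
    then obtain g where g1: "g \<in> borel_measurable lborel"
      and g2: "AE x in lborel. indicator unit_cube x *\<^sub>R u x = g x"
      using completion_ex_borel_measurable_real by blast
    have gb[measurable]: "g \<in> borel_measurable borel" using g1 by simp
    have gM[measurable]: "g \<in> borel_measurable ?M" by (rule measurable_compose[OF meas_id_Q gb])
    have ae: "AE x in ?M. u x = g x"
    proof (subst AE_restrict_space_iff)
      show "unit_cube \<inter> space lebesgue \<in> sets lebesgue" by simp
      show "AE x in lebesgue. x \<in> unit_cube \<longrightarrow> u x = g x"
        using AE_completion[OF g2] by (rule eventually_mono) (auto simp: indicator_def)
    qed
    have aeP: "AE z in ?M \<Otimes>\<^sub>M ?M. u (fst z) = g (fst z) \<and> u (snd z) = g (snd z)"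
    proof (rule Qpair.AE_pair_measure)
      show "{z \<in> space (?M \<Otimes>\<^sub>M ?M). u (fst z) = g (fst z) \<and> u (snd z) = g (snd z)} \<in> sets (?M \<Otimes>\<^sub>M ?M)"
        by measurable
      show "AE x in ?M. AE y in ?M. u (fst (x, y)) = g (fst (x, y)) \<and> u (snd (x, y)) = g (snd (x, y))"
        using ae by (rule eventually_mono) (use ae in \<open>auto elim: eventually_mono\<close>)
    qed
    have L: "(\<integral>\<^sup>+ z. ennreal (\<bar>u (fst z) - u (snd z)\<bar> / dist (fst z) (snd z) powr p) \<partial>(?M \<Otimes>\<^sub>M ?M))
      = (\<integral>\<^sup>+ z. ennreal (\<bar>g (fst z) - g (snd z)\<bar> / dist (fst z) (snd z) powr p) \<partial>(?M \<Otimes>\<^sub>M ?M))"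
      using aeP by (intro nn_integral_cong_AE) (auto elim: eventually_mono)
    have R: "(\<integral>\<^sup>+ z. ennreal (indicator {z. dist (fst z) (snd z) < \<delta>} z *
                 \<bar>u (fst z) - u (snd z)\<bar> / dist (fst z) (snd z) powr p) \<partial>(?M \<Otimes>\<^sub>M ?M))
      = (\<integral>\<^sup>+ z. ennreal (indicator {z. dist (fst z) (snd z) < \<delta>} z *
                 \<bar>g (fst z) - g (snd z)\<bar> / dist (fst z) (snd z) powr p) \<partial>(?M \<Otimes>\<^sub>M ?M))"
      using aeP by (intro nn_integral_cong_AE) (auto elim: eventually_mono)
    let ?Rg = "(\<integral>\<^sup>+ z. ennreal (indicator {z. dist (fst z) (snd z) < \<delta>} z *
                 \<bar>g (fst z) - g (snd z)\<bar> / dist (fst z) (snd z) powr p) \<partial>(?M \<Otimes>\<^sub>M ?M))"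
    let ?K = "(2 * (2::ennreal)^DIM(real^'n))^k"
    have full: "(\<integral>\<^sup>+z. ennreal \<bar>g (fst z) - g (snd z)\<bar> \<partial>(?M \<Otimes>\<^sub>M ?M)) \<le> ?K * ?Rg"
    proof -
      have "(\<integral>\<^sup>+z. ennreal \<bar>g (fst z) - g (snd z)\<bar> \<partial>(?M \<Otimes>\<^sub>M ?M)) = Iv g (2^k * r)"
        by (rule Iv_full[symmetric]) (rule kR)
      also have "\<dots> \<le> ?K * Iv g r" by (rule iter[OF gb])
      also have "\<dots> \<le> ?K * ?Rg"
        by (rule mult_left_mono) (use Iv_near[OF assms(3) p0, of g] in \<open>simp_all add: r_def\<close>)
      finally show ?thesis .
    qed
    have "(\<integral>\<^sup>+ z. ennreal (\<bar>g (fst z) - g (snd z)\<bar> / dist (fst z) (snd z) powr p) \<partial>(?M \<Otimes>\<^sub>M ?M))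
        \<le> ?Rg + ennreal (\<delta> powr (-p)) * (\<integral>\<^sup>+z. ennreal \<bar>g (fst z) - g (snd z)\<bar> \<partial>(?M \<Otimes>\<^sub>M ?M))"
      by (rule far[OF gb assms(3) p0])
    also have "\<dots> \<le> ?Rg + ennreal (\<delta> powr (-p)) * (?K * ?Rg)"
      by (intro add_left_mono mult_left_mono full) simp
    also have "\<dots> = ennreal C * ?Rg"
      unfolding eC by (simp add: distrib_right mult.assoc)
    finally show "(\<integral>\<^sup>+ z. ennreal (\<bar>u (fst z) - u (snd z)\<bar> / dist (fst z) (snd z) powr p) \<partial>(?M \<Otimes>\<^sub>M ?M))
       \<le> ennreal C * (\<integral>\<^sup>+ z. ennreal (indicator {z. dist (fst z) (snd z) < \<delta>} z *
                 \<bar>u (fst z) - u (snd z)\<bar> / dist (fst z) (snd z) powr p) \<partial>(?M \<Otimes>\<^sub>M ?M))"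
      unfolding L R .
  qed
qed

end
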